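(* Let $R$ be a weakly bleached local ring and let $s=\sum_{i=1}^{\infty}s_ix^i\in R[[x]]$ be central in $R[[x]]$ with $s\in J\big(R[[x]]\big)$. Let $s_0$ denote the constant term of $s$. For $A(x)\in M_2\big(R[[x]];s\big)$ the following are equivalent: (1) $A(x)$ is strongly $J$-clean in $M_2\big(R[[x]];s\big)$; (2) $A(0)$ is strongly $J$-clean in $M_2(R;s_0)$.
   Context: All rings are associative with identity. A ring $R$ is local if $R/J(R)$ is a division ring, where $J(R)$ is the Jacobson radical. A local ring $R$ is weakly bleached if for any $a\in J(R)$ and any $b\in 1+J(R)$ the additive maps $R\to R$, $r\mapsto br-ra$ and $r\mapsto ar-rb$, are both surjective. $R[[x]]$ is the formal power series ring; for a matrix $A(x)$ over $R[[x]]$, $A(0)$ is obtained by taking constant terms of all entries. For a ring $T$ and a central element $s\in T$, $M_2(T;s)$ denotes the ring whose elements are the $2\times 2$ arrays $\left[\begin{smallmatrix} a&b\\ c&d\end{smallmatrix}\right]$ with $a,b,c,d\in T$, with componentwise addition and multiplication $\left[\begin{smallmatrix} a&b\\ c&d\end{smallmatrix}\right]\left[\begin{smallmatrix} a'&b'\\ c'&d'\end{smallmatrix}\right]=\left[\begin{smallmatrix} aa'+s^2bc'&ab'+bd'\\ ca'+dc'&s^2cb'+dd'\end{smallmatrix}\right]$. An element $a$ of a ring $T$ is strongly $J$-clean if there is an idempotent $e\in T$ with $ae=ea$ and $a-e\in J(T)$. *)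

theory Defs
  imports "HOL-Computational_Algebra.Formal_Power_Series"
begin

definition jac_gen :: "('m \<Rightarrow> 'm \<Rightarrow> 'm) \<Rightarrow> ('m \<Rightarrow> 'm \<Rightarrow> 'm) \<Rightarrow> 'm \<Rightarrow> 'm set" where
  "jac_gen sub mul one = {a. \<forall>r. \<exists>u. mul u (sub one (mul r a)) = one}"

definition strongly_J_clean_gen ::
  "('m \<Rightarrow> 'm \<Rightarrow> 'm) \<Rightarrow> ('m \<Rightarrow> 'm \<Rightarrow> 'm) \<Rightarrow> 'm \<Rightarrow> 'm \<Rightarrow> bool" where
  "strongly_J_clean_gen sub mul one a \<longleftrightarrow>
     (\<exists>e. mul e e = e \<and> mul a e = mul e a \<and> sub a e \<in> jac_gen sub mul one)"

definition jac :: "'a::ring_1 set" where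
  "jac = jac_gen (-) (*) 1"

text \<open>R/J(R) is a division ring: it is nonzero (1 not in J) and every class outside J
  (i.e. every nonzero class) has a two-sided inverse modulo J.\<close>
definition local_ring :: "'a::ring_1 itself \<Rightarrow> bool" where
  "local_ring _ \<longleftrightarrow> (1::'a) \<notin> jac \<and>
     (\<forall>a::'a. a \<notin> jac \<longrightarrow> (\<exists>b. a * b - 1 \<in> jac \<and> b * a - 1 \<in> jac))"

definition weakly_bleached :: "'a::ring_1 itself \<Rightarrow> bool" where
  "weakly_bleached T \<longleftrightarrow> local_ring T \<and>
     (\<forall>a b::'a. a \<in> jac \<longrightarrow> b - 1 \<in> jac \<longrightarrow>
        surj (\<lambda>r. b * r - r * a) \<and> surj (\<lambda>r. a * r - r * b))"

text \<open>An element (a,b,c,d) represents the array [a b; c d].\<close>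
type_synonym 'a m2 = "'a \<times> 'a \<times> 'a \<times> 'a"

definition m2_sub :: "'a::ring_1 m2 \<Rightarrow> 'a m2 \<Rightarrow> 'a m2" where
  "m2_sub X Y = (case X of (a,b,c,d) \<Rightarrow> case Y of (a',b',c',d') \<Rightarrow>
      (a - a', b - b', c - c', d - d'))"

definition m2_mul :: "'a::ring_1 \<Rightarrow> 'a m2 \<Rightarrow> 'a m2 \<Rightarrow> 'a m2" where
  "m2_mul s X Y = (case X of (a,b,c,d) \<Rightarrow> case Y of (a',b',c',d') \<Rightarrow>
      (a * a' + s^2 * b * c', a * b' + b * d', c * a' + d * c', s^2 * c * b' + d * d'))"

definition m2_one :: "'a::ring_1 m2" where
  "m2_one = (1, 0, 0, 1)"

definition strongly_J_clean_m2 :: "'a::ring_1 \<Rightarrow> 'a m2 \<Rightarrow> bool" where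
  "strongly_J_clean_m2 s A = strongly_J_clean_gen m2_sub (m2_mul s) m2_one A"

definition m2_at0 :: "'a::ring_1 fps m2 \<Rightarrow> 'a m2" where
  "m2_at0 A = (case A of (a,b,c,d) \<Rightarrow> (fps_nth a 0, fps_nth b 0, fps_nth c 0, fps_nth d 0))"

end

theory Submission
  imports Defs
begin
unbundle fps_syntax

lemma jac_iff: "x \<in> (jac::'a::ring_1 set) \<longleftrightarrow> (\<forall>r. \<exists>u. u * (1 - r*x) = 1)"
  by (simp add: jac_def jac_gen_def)

lemma jac_unit:
  assumes "x \<in> (jac::'a::ring_1 set)"
  shows "\<exists>w. w*(1 - r*x) = 1 \<and> (1 - r*x)*w = 1"
proof -
  obtain u where u: "u*(1 - r*x) = 1" using assms by (auto simp: jac_iff)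
  have "u - u*(r*x) = 1" using u by (simp add: right_diff_distrib)
  hence "u = 1 + u*(r*x)" by (simp add: diff_eq_eq)
  hence ue: "u = 1 - (- (u*r))*x" by (simp add: mult.assoc)
  have "\<forall>r. \<exists>u. u*(1 - r*x) = 1" using assms jac_iff by blast
  then obtain v where v: "v*(1 - (-(u*r))*x) = 1" by blast
  hence vu: "v*u = 1" using ue by simp
  have "v = v*(u*(1-r*x))" using u by simp
  also have "\<dots> = 1 - r*x" by (simp add: mult.assoc[symmetric] vu)
  finally have "v = 1 - r*x" .
  with vu have "(1-r*x)*u = 1" by simp
  with u show ?thesis by blast
qed

lemma jac_neg: "x \<in> (jac::'a::ring_1 set) \<Longrightarrow> -x \<in> jac"
  unfolding jac_iff by (metis minus_mult_commute)

lemma local_idem: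
  assumes "local_ring TYPE('a::ring_1)" "(e::'a)*e = e"
  shows "e = 0 \<or> e = 1"
proof (cases "e \<in> jac")
  case True
  then obtain w where w: "w*(1 - 1*e) = 1" using jac_unit by blast
  have "(1-e)*(1-e) = 1-e" using assms(2) by (simp add: algebra_simps)
  hence "w*((1-e)*(1-e)) = w*(1-e)" by simp
  hence "1 - e = 1" using w by (simp add: mult.assoc[symmetric])
  thus ?thesis by simp
next
  case False
  then obtain b where b: "e*b - 1 \<in> jac" using assms(1) unfolding local_ring_def by blast
  then obtain w where w: "(1 - (-1)*(e*b - 1))*w = 1" using jac_unit by blast
  hence w2: "e*(b*w) = 1" by (simp add: mult.assoc)
  have "e = e*(e*(b*w))" using w2 by simp
  also have "\<dots> = e*(b*w)" using assms(2) by (simp add: mult.assoc[symmetric])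
  finally show ?thesis using w2 by simp
qed

function cseq :: "('a \<Rightarrow> 'a) \<Rightarrow> ((nat \<Rightarrow> 'a) \<Rightarrow> nat \<Rightarrow> 'a) \<Rightarrow> nat \<Rightarrow> 'a" where
  "cseq L F n = (SOME r. L r = F (\<lambda>k. if k < n then cseq L F k else undefined) n)"
  by auto
termination by (relation "measure (\<lambda>(L,F,n). n)") auto

lemma causal_exists:
  fixes L :: "'a \<Rightarrow> 'a" and F :: "(nat \<Rightarrow> 'a) \<Rightarrow> nat \<Rightarrow> 'a"
  assumes "surj L" and "\<And>z z' n. (\<And>k. k<n \<Longrightarrow> z k = z' k) \<Longrightarrow> F z n = F z' n"
  shows "\<exists>z. \<forall>n. L (z n) = F z n"
proof (intro exI allI)
  fix n
  have "F (cseq L F) n = F (\<lambda>k. if k < n then cseq L F k else undefined) n"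
    by (rule assms(2)) simp
  moreover have "L (cseq L F n) = F (\<lambda>k. if k < n then cseq L F k else undefined) n"
    unfolding cseq.simps[of L F n]
    by (rule someI_ex) (metis assms(1) surjD)
  ultimately show "L (cseq L F n) = F (cseq L F) n" by simp
qed

lemma fps_solve:
  fixes u v :: "'a::ring_1 fps" and N :: "'a fps \<Rightarrow> 'a fps"
  assumes su: "surj (\<lambda>r. r * u $ 0 - v $ 0 * r)"
  and caus: "\<And>Z Z' n. (\<And>k. k<n \<Longrightarrow> Z $ k = Z'$k) \<Longrightarrow> N Z $ n = N Z' $ n"
  shows "\<exists>Z. Z*u - v*Z = N Z"
proof -
  define F where "F = (\<lambda>z n. N (Abs_fps z) $ n - (\<Sum>i<n. z i * u $ (n-i)) + (\<Sum>i\<in>{1..n}. v $ i * z (n-i)))"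
  have "\<exists>z. \<forall>n. (\<lambda>r. r * u $ 0 - v $ 0 * r) (z n) = F z n"
  proof (rule causal_exists[OF su])
    fix z z' :: "nat \<Rightarrow> 'a" and n assume h: "\<And>k. k<n \<Longrightarrow> z k = z' k"
    have "N (Abs_fps z) $ n = N (Abs_fps z') $ n" by (rule caus) (simp add: h)
    moreover have "(\<Sum>i<n. z i * u $ (n-i)) = (\<Sum>i<n. z' i * u $ (n-i))"
      by (rule sum.cong) (auto simp: h)
    moreover have "(\<Sum>i\<in>{1..n}. v $ i * z (n-i)) = (\<Sum>i\<in>{1..n}. v $ i * z' (n-i))"
      by (rule sum.cong) (auto simp: h)
    ultimately show "F z n = F z' n" by (simp add: F_def)
  qed
  then obtain z where z: "\<And>n. z n * u $ 0 - v $ 0 * z n = F z n" by auto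
  show ?thesis
  proof (intro exI fps_ext)
    fix n
    have a: "(Abs_fps z * u) $ n = (\<Sum>i<n. z i * u $ (n-i)) + z n * u $ 0"
      by (simp add: fps_mult_nth atLeast0AtMost lessThan_Suc_atMost[symmetric])
    have b: "(v * Abs_fps z) $ n = v $ 0 * z n + (\<Sum>i\<in>{1..n}. v $ i * z (n-i))"
      by (simp add: fps_mult_nth sum.atLeast_Suc_atMost)
    show "(Abs_fps z * u - v * Abs_fps z) $ n = N (Abs_fps z) $ n"
      using z[of n] by (simp add: a b F_def algebra_simps)
  qed
qed

lemma fps_unit:
  fixes f :: "'a::ring_1 fps"
  assumes "w * f $ 0 = 1" "f $ 0 * w = 1"
  shows "\<exists>g. g*f = 1 \<and> f*g = 1"
proof -
  have s1: "surj (\<lambda>r. r * f $ 0 - (0::'a fps) $ 0 * r)"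
  proof (rule surjI)
    fix c show "(c*w) * f $ 0 - (0::'a fps) $ 0 * (c*w) = c" using assms by (simp add: mult.assoc)
  qed
  obtain g where g: "g*f - 0*g = (1::'a fps)"
    using fps_solve[OF s1, of "\<lambda>_. 1"] by auto
  have s2: "surj (\<lambda>r. r * (0::'a fps) $ 0 - (-f) $ 0 * r)"
  proof (rule surjI)
    fix c show "(w*c) * (0::'a fps) $ 0 - (-f) $ 0 * (w*c) = c" using assms by (simp add: mult.assoc[symmetric])
  qed
  obtain h where h: "h*0 - (-f)*h = (1::'a fps)"
    using fps_solve[OF s2, of "\<lambda>_. 1"] by auto
  have g1: "g*f = 1" using g by simp
  have h1: "f*h = 1" using h by simp
  have "g = g*(f*h)" using h1 by simp
  also have "\<dots> = h" by (simp add: mult.assoc[symmetric] g1)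
  finally show ?thesis using g1 h1 by blast
qed

lemma low1:
  fixes q D :: "'a::ring_1 fps"
  assumes "q $ 0 = 0" "\<And>k. k<n \<Longrightarrow> D $ k = 0" "k \<le> n"
  shows "(q*D) $ k = 0"
  unfolding fps_mult_nth
proof (rule sum.neutral, rule ballI)
  fix i assume "i \<in> {0..k}"
  show "q $ i * D $ (k - i) = 0"
  proof (cases "i = 0")
    case True then show ?thesis using assms(1) by simp
  next
    case False then show ?thesis using assms(2)[of "k-i"] assms(3) \<open>i \<in> {0..k}\<close> by simp
  qed
qed

lemma low2:
  fixes P W :: "'a::ring_1 fps"
  assumes "\<And>k. k \<le> n \<Longrightarrow> P $ k = 0"
  shows "(P*W) $ n = 0" "(W*P) $ n = 0"
  unfolding fps_mult_nth using assms by (auto intro!: sum.neutral)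

lemma ric_caus:
  fixes q g b Z Z' :: "'a::ring_1 fps"
  assumes "q $ 0 = 0" "\<And>k. k<n \<Longrightarrow> Z $ k = Z' $ k"
  shows "(g - q*Z*b*Z) $ n = (g - q*Z'*b*Z') $ n"
proof -
  have e: "q*Z*b*Z - q*Z'*b*Z' = (q*(Z-Z'))*(b*Z) + (q*Z'*b)*(Z-Z')"
    by (simp add: algebra_simps)
  have d: "\<And>k. k<n \<Longrightarrow> (Z-Z') $ k = 0" using assms(2) by simp
  have 1: "((q*(Z-Z'))*(b*Z)) $ n = 0"
    by (rule low2(1)) (rule low1[OF assms(1) d])
  have 2: "((q*Z'*b)*(Z-Z')) $ n = 0"
    by (rule low1[where n=n]) (use assms(1) d in auto)
  have "(q*Z*b*Z - q*Z'*b*Z') $ n = 0" unfolding e using 1 2 by simp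
  thus ?thesis by (simp add: algebra_simps)
qed

lemma m2_mul_simp: "m2_mul s (a,b,c,d) (a',b',c',d') = (a*a' + s^2*b*c', a*b'+b*d', c*a'+d*c', s^2*c*b'+d*d')"
  by (simp add: m2_mul_def)
lemma m2_sub_simp: "m2_sub (a,b,c,d) (a',b',c',d') = (a-a', b-b', c-c', d-d')"
  by (simp add: m2_sub_def)

lemma m2_assoc:
  fixes s :: "'a::ring_1"
  assumes c: "\<And>t. s*t = t*s"
  shows "m2_mul s (m2_mul s X Y) Z = m2_mul s X (m2_mul s Y Z)"
proof -
  have s2: "\<And>t u. t * (s^2 * u) = s^2 * (t * u)"
    by (metis c mult.assoc power2_eq_square)
  obtain a b c d where X: "X = (a,b,c,d)" by (cases X) auto
  obtain a' b' c' d' where Y: "Y = (a',b',c',d')" by (cases Y) auto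
  obtain a'' b'' c'' d'' where Z: "Z = (a'',b'',c'',d'')" by (cases Z) auto
  show ?thesis unfolding X Y Z m2_mul_simp
    by (simp add: algebra_simps s2)
qed

lemma m2_one_mul: "m2_mul s m2_one X = X" "m2_mul s X m2_one = X"
  by (cases X; simp add: m2_one_def m2_mul_def)+

lemma s2_0: "fps_nth (s::'a::ring_1 fps) 0 = 0 \<Longrightarrow> (s^2) $ 0 = 0"
  by (simp add: power2_eq_square)

lemma m2_leftinv:
  fixes s :: "'a::ring_1 fps"
  assumes s0: "s $ 0 = 0" and cen: "\<And>t. s*t = t*s"
  and u1: "w1 * Y1 $ 0 = 1" "Y1 $ 0 * w1 = 1"
  and u4: "w4 * Y4 $ 0 = 1" "Y4 $ 0 * w4 = 1"
  shows "\<exists>U. m2_mul s U (Y1,Y2,Y3,Y4) = m2_one"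
proof -
  obtain I1 where I1: "I1*Y1 = 1" "Y1*I1 = 1" using fps_unit[OF u1] by blast
  define c where "c = Y3*I1"
  define D where "D = Y4 - s^2*c*Y2"
  have D0: "D $ 0 = Y4 $ 0" using s0 by (simp add: D_def power2_eq_square)
  obtain I4 where I4: "I4*D = 1" using fps_unit[of w4 D] u4 D0 by auto
  have LY: "m2_mul s (1,0,-c,1) (Y1,Y2,Y3,Y4) = (Y1,Y2,0,D)"
    by (simp add: m2_mul_simp D_def c_def mult.assoc I1)
  have UY: "m2_mul s (I1, -(I1*Y2*I4), 0, I4) (Y1,Y2,0,D) = m2_one"
    by (simp add: m2_mul_simp m2_one_def I1 I4 mult.assoc)
  show ?thesis
    by (rule exI[of _ "m2_mul s (I1, -(I1*Y2*I4), 0, I4) (1,0,-c,1)"])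
       (simp add: m2_assoc[OF cen] LY UY)
qed

lemma JS:
  fixes s :: "'a::ring_1 fps"
  assumes s0: "s $ 0 = 0" and cen: "\<And>t. s*t = t*s"
  and j1: "X1 $ 0 \<in> jac" and j4: "X4 $ 0 \<in> jac"
  shows "(X1,X2,X3,X4) \<in> jac_gen m2_sub (m2_mul s) m2_one"
  unfolding jac_gen_def
proof (intro CollectI allI)
  fix R :: "'a fps m2"
  obtain r1 r2 r3 r4 where R: "R = (r1,r2,r3,r4)" by (cases R) auto
  obtain w1 where w1: "w1*(1 - r1 $ 0 * X1 $ 0) = 1" "(1 - r1 $ 0 * X1 $ 0)*w1 = 1"
    using jac_unit[OF j1] by blast
  obtain w4 where w4: "w4*(1 - r4 $ 0 * X4 $ 0) = 1" "(1 - r4 $ 0 * X4 $ 0)*w4 = 1"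
    using jac_unit[OF j4] by blast
  have e: "m2_sub m2_one (m2_mul s R (X1,X2,X3,X4)) =
     (1 - (r1*X1 + s^2*r2*X3), 0 - (r1*X2 + r2*X4), 0 - (r3*X1 + r4*X3), 1 - (s^2*r3*X2 + r4*X4))"
    by (simp add: R m2_mul_simp m2_sub_simp m2_one_def)
  have a: "(1 - (r1*X1 + s^2*r2*X3)) $ 0 = 1 - r1 $ 0 * X1 $ 0" using s0 by (simp add: power2_eq_square)
  have b: "(1 - (s^2*r3*X2 + r4*X4)) $ 0 = 1 - r4 $ 0 * X4 $ 0" using s0 by (simp add: power2_eq_square)
  show "\<exists>u. m2_mul s u (m2_sub m2_one (m2_mul s R (X1, X2, X3, X4))) = m2_one"
    unfolding e by (rule m2_leftinv[OF s0 cen]) (use w1 w4 a b in simp_all)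
qed

lemma surj_neg: "surj f \<Longrightarrow> surj (\<lambda>r. - (f r::'a::ring_1))"
  by (metis (no_types, lifting) minus_minus surj_def)

lemma mixed:
  fixes s :: "'a::ring_1 fps"
  assumes wb: "weakly_bleached TYPE('a)" and s0: "s $ 0 = 0" and cen: "\<And>t. s*t = t*s"
  and ja: "al $ 0 - 1 \<in> jac" and jd: "de $ 0 \<in> jac"
  shows "\<exists>E1 E2 E3 E4. m2_mul s (E1,E2,E3,E4) (E1,E2,E3,E4) = (E1,E2,E3,E4)
     \<and> m2_mul s (al,be,ga,de) (E1,E2,E3,E4) = m2_mul s (E1,E2,E3,E4) (al,be,ga,de)
     \<and> E1 $ 0 = 1 \<and> E4 $ 0 = 0"
proof -
  have s2c: "\<And>t. s^2*t = t*s^2" by (metis cen mult.assoc power2_eq_square)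
  have s2: "\<And>t u. t * (s^2 * u) = s^2 * (t * u)" by (metis s2c mult.assoc)
  have wb1: "surj (\<lambda>r. de $ 0 * r - r * al $ 0)" "surj (\<lambda>r. al $ 0 * r - r * de $ 0)"
    using wb ja jd unfolding weakly_bleached_def by blast+
  have su1: "surj (\<lambda>r. r * al $ 0 - de $ 0 * r)"
    using surj_neg[OF wb1(1)] by (simp add: algebra_simps)
  obtain Z where Z: "Z*al - de*Z = ga - s^2*Z*be*Z"
    using fps_solve[OF su1, of "\<lambda>Z. ga - s^2*Z*be*Z"] ric_caus[OF s2_0[OF s0]] by blast
  define al' where "al' = al + s^2*be*Z"
  define de' where "de' = de - s^2*Z*be"
  have su2: "surj (\<lambda>r. r * de' $ 0 - al' $ 0 * r)"
    using surj_neg[OF wb1(2)] s0 by (simp add: algebra_simps al'_def de'_def power2_eq_square)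
  obtain Y where Y: "Y*de' - al'*Y = be"
    using fps_solve[OF su2, of "\<lambda>_. be"] by blast
  define M where "M = m2_mul s"
  have as: "\<And>X Y Z. M (M X Y) Z = M X (M Y Z)" unfolding M_def by (rule m2_assoc[OF cen])
  define A where "A = (al,be,ga,de)"
  define L where "L = ((1::'a fps),(0::'a fps),Z,(1::'a fps))"
  define Li where "Li = ((1::'a fps),(0::'a fps),-Z,(1::'a fps))"
  define V where "V = ((1::'a fps),Y,(0::'a fps),(1::'a fps))"
  define Vi where "Vi = ((1::'a fps),-Y,(0::'a fps),(1::'a fps))"
  define B where "B = (al',be,0::'a fps,de')"
  define D where "D = (al',0::'a fps,0::'a fps,de')"
  define P where "P = ((1::'a fps),(0::'a fps),(0::'a fps),(0::'a fps))"
  have AL: "M A L = M L B"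
  proof -
    have "ga + de*Z = Z*al + s^2*Z*be*Z" using Z by (simp add: algebra_simps)
    thus ?thesis unfolding M_def A_def L_def B_def m2_mul_simp al'_def de'_def
      by (simp add: algebra_simps s2)
  qed
  have BV: "M B V = M V D"
    unfolding M_def B_def V_def D_def m2_mul_simp using Y by (simp add: algebra_simps)
  have LLi: "M L Li = m2_one" "M Li L = m2_one"
    unfolding M_def L_def Li_def m2_mul_simp m2_one_def by simp_all
  have VVi: "M V Vi = m2_one" "M Vi V = m2_one"
    unfolding M_def V_def Vi_def m2_mul_simp m2_one_def by simp_all
  have PD: "M P D = M D P" and PP: "M P P = P"
    unfolding M_def P_def D_def m2_mul_simp by simp_all
  define W where "W = M L V"
  define Wi where "Wi = M Vi Li"
  have one: "\<And>X. M m2_one X = X" "\<And>X. M X m2_one = X" unfolding M_def by (simp_all add: m2_one_mul)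
  have VX: "\<And>X. M V (M Vi X) = X" "\<And>X. M Li (M L X) = X"
    by (simp_all add: as[symmetric] VVi LLi one)
  have WWi: "M W Wi = m2_one" unfolding W_def Wi_def
    by (simp add: as VX LLi)
  have WiW: "M Wi W = m2_one" unfolding W_def Wi_def
    by (simp add: as VX VVi)
  have AW: "M A W = M W D" unfolding W_def
    by (simp add: as[symmetric] AL) (simp add: as BV)
  have Aeq: "A = M W (M D Wi)"
  proof -
    have "A = M A (M W Wi)" by (simp add: WWi one)
    also have "\<dots> = M W (M D Wi)" by (simp add: as[symmetric] AW)
    finally show ?thesis .
  qed
  have WiWX: "\<And>X. M Wi (M W X) = X" by (simp add: as[symmetric] WiW one)
  have PPX: "\<And>X. M P (M P X) = M P X" by (simp add: as[symmetric] PP)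
  have DPX: "\<And>X. M D (M P X) = M P (M D X)" by (simp add: as[symmetric] PD)
  define E where "E = M W (M P Wi)"
  have EE: "M E E = E" unfolding E_def by (simp add: as WiWX PPX)
  have AE: "M A E = M E A" unfolding E_def
    by (subst (1 2) Aeq) (simp add: as WiWX DPX)
  obtain E1 E2 E3 E4 where Ed: "E = (E1,E2,E3,E4)" by (cases E) auto
  have "E = (1 + s^2*Y*Z, -Y, Z + s^2*Z*Y*Z, - (s^2*Z*Y))"
    unfolding E_def W_def Wi_def M_def L_def V_def P_def Vi_def Li_def m2_mul_simp
    by (simp add: algebra_simps s2)
  hence "E1 $ 0 = 1" "E4 $ 0 = 0" using Ed s0 by (auto simp: power2_eq_square)
  thus ?thesis using EE AE Ed unfolding M_def A_def by auto
qed

lemma at0_mul: "(s::'a::ring_1 fps) $ 0 = 0 \<Longrightarrow> m2_at0 (m2_mul s X Y) = m2_mul 0 (m2_at0 X) (m2_at0 Y)"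
  by (cases X; cases Y) (simp add: m2_mul_simp m2_at0_def power2_eq_square)
lemma at0_sub: "m2_at0 (m2_sub X Y) = m2_sub (m2_at0 X) (m2_at0 (Y::'a::ring_1 fps m2))"
  by (cases X; cases Y) (simp add: m2_sub_simp m2_at0_def)
lemma at0_one: "m2_at0 (m2_one::'a::ring_1 fps m2) = m2_one"
  by (simp add: m2_one_def m2_at0_def)

lemma J_map:
  fixes s :: "'a::ring_1 fps"
  assumes s0: "s $ 0 = 0" and X: "X \<in> jac_gen m2_sub (m2_mul s) m2_one"
  shows "m2_at0 X \<in> jac_gen m2_sub (m2_mul 0) m2_one"
  unfolding jac_gen_def
proof (intro CollectI allI)
  fix r :: "'a m2"
  obtain r1 r2 r3 r4 where r: "r = (r1,r2,r3,r4)" by (cases r) auto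
  let ?R = "(fps_const r1, fps_const r2, fps_const r3, fps_const r4)"
  have Ra: "m2_at0 ?R = r" by (simp add: r m2_at0_def)
  obtain u where "m2_mul s u (m2_sub m2_one (m2_mul s ?R X)) = m2_one"
    using X unfolding jac_gen_def by blast
  hence "m2_at0 (m2_mul s u (m2_sub m2_one (m2_mul s ?R X))) = m2_one"
    by (simp add: at0_one)
  hence "m2_mul 0 (m2_at0 u) (m2_sub m2_one (m2_mul 0 r (m2_at0 X))) = m2_one"
    by (simp add: at0_mul[OF s0] at0_sub at0_one Ra)
  thus "\<exists>u. m2_mul 0 u (m2_sub m2_one (m2_mul 0 r (m2_at0 X))) = m2_one" by blast
qed

lemma TJ:
  assumes "((a::'a::ring_1),b,c,d) \<in> jac_gen m2_sub (m2_mul 0) m2_one"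
  shows "a \<in> jac" "d \<in> jac"
proof -
  show "a \<in> jac" unfolding jac_iff
  proof
    fix r :: 'a
    obtain u where "m2_mul 0 u (m2_sub m2_one (m2_mul 0 (r,0,0,0) (a,b,c,d))) = m2_one"
      using assms unfolding jac_gen_def by blast
    thus "\<exists>u. u*(1 - r*a) = 1"
      by (cases u) (auto simp: m2_mul_simp m2_sub_simp m2_one_def)
  qed
  show "d \<in> jac" unfolding jac_iff
  proof
    fix r :: 'a
    obtain u where "m2_mul 0 u (m2_sub m2_one (m2_mul 0 (0,0,0,r) (a,b,c,d))) = m2_one"
      using assms unfolding jac_gen_def by blast
    thus "\<exists>u. u*(1 - r*d) = 1"
      by (cases u) (auto simp: m2_mul_simp m2_sub_simp m2_one_def)
  qed
qed

lemma sub_one_mul: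
  "m2_mul s (m2_sub m2_one X) Y = m2_sub Y (m2_mul s X Y)"
  "m2_mul s X (m2_sub m2_one Y) = m2_sub X (m2_mul s X Y)"
  by (cases X; cases Y; simp add: m2_mul_simp m2_sub_simp m2_one_def algebra_simps)+

lemma sJc_of:
  assumes "m2_mul s E E = E" "m2_mul s A E = m2_mul s E A" "m2_sub A E \<in> jac_gen m2_sub (m2_mul s) m2_one"
  shows "strongly_J_clean_m2 s A"
  unfolding strongly_J_clean_m2_def strongly_J_clean_gen_def using assms by blast

theorem theorem2p18:
  fixes s :: "'a::ring_1 fps" and A :: "'a fps m2"
  assumes "weakly_bleached TYPE('a)"
    and "fps_nth s 0 = 0"
    and "\<forall>t. s * t = t * s"
    and "s \<in> jac"
  shows "strongly_J_clean_m2 s A \<longleftrightarrow> strongly_J_clean_m2 (fps_nth s 0) (m2_at0 A)"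
proof -
  note wb = assms(1)
  have s0: "s $ 0 = 0" using assms(2) by simp
  have cen: "\<And>t. s*t = t*s" using assms(3) by blast
  have loc: "local_ring TYPE('a)" using wb by (simp add: weakly_bleached_def)
  obtain al be ga de where A: "A = (al,be,ga,de)" by (cases A) auto
  show ?thesis
  proof
    assume "strongly_J_clean_m2 s A"
    then obtain E where E: "m2_mul s E E = E" "m2_mul s A E = m2_mul s E A"
      "m2_sub A E \<in> jac_gen m2_sub (m2_mul s) m2_one"
      unfolding strongly_J_clean_m2_def strongly_J_clean_gen_def by blast
    show "strongly_J_clean_m2 (fps_nth s 0) (m2_at0 A)"
      unfolding s0
      apply (rule sJc_of[of _ "m2_at0 E"])
      using arg_cong[OF E(1), of m2_at0] arg_cong[OF E(2), of m2_at0] J_map[OF s0 E(3)]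
      by (simp_all add: at0_mul[OF s0] at0_sub)
  next
    assume "strongly_J_clean_m2 (fps_nth s 0) (m2_at0 A)"
    then obtain E0 where E0: "m2_mul 0 E0 E0 = E0" "m2_sub (m2_at0 A) E0 \<in> jac_gen m2_sub (m2_mul 0) m2_one"
      unfolding strongly_J_clean_m2_def strongly_J_clean_gen_def s0 by blast
    obtain e f g h where Ed: "E0 = (e,f,g,h)" by (cases E0) auto
    have ee: "e*e = e" "h*h = h" using E0(1) unfolding Ed m2_mul_simp by simp_all
    have jj: "al $ 0 - e \<in> jac" "de $ 0 - h \<in> jac"
      using TJ[of "al $ 0 - e" "be $ 0 - f" "ga $ 0 - g" "de $ 0 - h"] E0(2)
      unfolding A Ed m2_at0_def by (simp_all add: m2_sub_simp)
    have e01: "e = 0 \<or> e = 1" and h01: "h = 0 \<or> h = 1" using local_idem[OF loc] ee by blast+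
    show "strongly_J_clean_m2 s A"
    proof (cases "e = 0")
      case e0: True
      show ?thesis
      proof (cases "h = 0")
        case True
        show ?thesis
          by (rule sJc_of[of _ "(0,0,0,0)"])
             (use jj e0 True in \<open>simp_all add: A m2_mul_simp m2_sub_simp JS[OF s0 cen]\<close>)
      next
        case False
        hence h1: "h = 1" using h01 by simp
        have j1: "(1 - al) $ 0 - 1 \<in> jac" using jac_neg[OF jj(1)] e0 by simp
        have j2: "(1 - de) $ 0 \<in> jac" using jac_neg[OF jj(2)] h1 by (simp add: algebra_simps)
        obtain E1 E2 E3 E4 where EE: "m2_mul s (E1,E2,E3,E4) (E1,E2,E3,E4) = (E1,E2,E3,E4)"
          "m2_mul s (1-al,-be,-ga,1-de) (E1,E2,E3,E4) = m2_mul s (E1,E2,E3,E4) (1-al,-be,-ga,1-de)"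
          "E1 $ 0 = 1" "E4 $ 0 = 0"
          using mixed[OF wb s0 cen j1 j2] by blast
        define E' where "E' = (E1,E2,E3,E4)"
        define A' where "A' = (1-al,-be,-ga,1-de)"
        have AA: "A = m2_sub m2_one A'" unfolding A A'_def by (simp add: m2_sub_simp m2_one_def)
        have zz: "\<And>X Y::'a fps m2. m2_sub X (m2_sub Y Y) = X" by (case_tac X, case_tac Y) (simp add: m2_sub_simp)
        show ?thesis
        proof (rule sJc_of[of _ "m2_sub m2_one E'"])
          show "m2_mul s (m2_sub m2_one E') (m2_sub m2_one E') = m2_sub m2_one E'"
            using EE(1) unfolding E'_def[symmetric] by (simp add: sub_one_mul zz)
          have "m2_mul s A' E' = m2_mul s E' A'" using EE(2) unfolding E'_def A'_def .
          thus "m2_mul s A (m2_sub m2_one E') = m2_mul s (m2_sub m2_one E') A"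
            unfolding AA sub_one_mul unfolding A'_def E'_def
            by (cases "m2_mul s (E1, E2, E3, E4) (1 - al, - be, - ga, 1 - de)")
               (simp add: m2_sub_simp m2_one_def)
          show "m2_sub A (m2_sub m2_one E') \<in> jac_gen m2_sub (m2_mul s) m2_one"
            unfolding A E'_def m2_sub_simp[of 1 0 0 1, folded m2_one_def] m2_sub_simp
            by (rule JS[OF s0 cen]) (use jj e0 h1 EE in simp_all)
        qed
      qed
    next
      case False
      hence e1: "e = 1" using e01 by simp
      show ?thesis
      proof (cases "h = 0")
        case True
        obtain E1 E2 E3 E4 where EE: "m2_mul s (E1,E2,E3,E4) (E1,E2,E3,E4) = (E1,E2,E3,E4)"
          "m2_mul s (al,be,ga,de) (E1,E2,E3,E4) = m2_mul s (E1,E2,E3,E4) (al,be,ga,de)"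
          "E1 $ 0 = 1" "E4 $ 0 = 0"
          using mixed[OF wb s0 cen, of al de be ga] jj e1 True by auto
        show ?thesis
        proof (rule sJc_of[of _ "(E1,E2,E3,E4)"])
          show "m2_sub A (E1,E2,E3,E4) \<in> jac_gen m2_sub (m2_mul s) m2_one"
            unfolding A m2_sub_simp
            by (rule JS[OF s0 cen]) (use jj e1 True EE in simp_all)
        qed (use EE A in simp_all)
      next
        case False
        hence h1: "h = 1" using h01 by simp
        show ?thesis
        proof (rule sJc_of[of _ "m2_one"])
          show "m2_sub A m2_one \<in> jac_gen m2_sub (m2_mul s) m2_one"
            unfolding A m2_sub_simp[of _ _ _ _ 1 0 0 1, folded m2_one_def]
            by (rule JS[OF s0 cen]) (use jj e1 h1 in simp_all)
        qed (simp_all add: m2_one_mul)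
      qed
    qed
  qed
qed

end
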